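(* Consider the case of independent observations $X_t=\mathbf{A}_0Z_t$, so that the limiting spectral distribution of $\Sigma=\mathrm{Var}(X_t)$ is $F^{\Sigma}=\sum_{j=1}^J\omega_j^0\delta_{\lambda_j^0}$ with $\boldsymbol\omega^0\in\Delta^J$ and distinct nonnegative reals $\lambda_1^0,\dots,\lambda_J^0$; here the coordinate spectral densities are constant: $h(\lambda_j^0,\theta)\equiv\lambda_j^0$. Let $p/n\to c\in(0,\infty)$, let $\mathcal{G}=\{g_0\}$ with $g_0(\theta)\equiv1$, and let $\mathcal{Z}=\{z_1,\dots,z_D\}$ be a finite set of points in a closed bounded subset of $\mathbb{C}^+$ with $D\ge J$ and $z_1,\dots,z_D$ distinct. Let $\mathbf{B}$ be any $J\times(J-1)$ matrix of rank $J-1$ with $\mathbf{B}^T\mathbf{1}_J=0$. Then $\mathbf{B}^T\mathcal{M}_{\mathcal{G},\mathcal{Z}}(\boldsymbol\Lambda_J^0,\boldsymbol\omega^0)\mathbf{B}$ is positive definite, where $$\mathcal{M}_{\mathcal{G},\mathcal{Z}}(\boldsymbol\Lambda_J^0,\boldsymbol\omega^0)=\frac{1}{|\mathcal{Z}|}\sum_{z\in\mathcal{Z}}\Big(\frac{1}{2\pi}\int_0^{2\pi}\frac{\mathbf{v}^0(z)\,d\theta}{(cM^0(z)-z)^2}\Big)\Big(\frac{1}{2\pi}\int_0^{2\pi}\frac{\mathbf{v}^0(z)\,d\theta}{(cM^0(z)-z)^2}\Big)^*,$$ with $\mathbf{v}^0(z)=\big(\lambda_j^0/(1+K^0(\lambda_j^0,z))\big)_{j=1}^J$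 and $M^0(z)=\sum_{j=1}^J\omega_j^0\lambda_j^0/(1+K^0(\lambda_j^0,z))$.
   Context: $\Delta^J=\{\mathbf{x}\in\mathbb{R}^J:x_j\ge0,\sum_jx_j=1\}$, $\mathbb{C}^+=\{z:\Im z>0\}$. $K^0$ and $M^0$ are the limiting objects for $g_0\equiv1$: $K^0(\lambda,z)=\frac{1}{2\pi}\int_0^{2\pi}\frac{\lambda\,d\theta}{cM^0(z)-z}=\lambda S^0(z)$ where $S^0(z)=\frac{1}{cM^0(z)-z}$ is the Stieltjes transform of the limiting spectral distribution of $\frac1n\tilde{\mathbf{X}}_n^*\tilde{\mathbf{X}}_n$ (equivalently of the $n\times n$ companion of the sample covariance matrix) under the true distribution $\sum_j\omega_j^0\delta_{\lambda_j^0}$, and $K^0(\lambda,\cdot)$ is required to be a Stieltjes transform of a measure of total mass $\lambda$. This is the matrix whose positive definiteness (after compression by $\mathbf{B}$) is a sufficient condition for consistency of the $L^2$ minimum-Stieltjes-distance estimator of the weights $\boldsymbol\omega^0$. *)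

theory Defs
  imports "HOL-Analysis.Analysis" "Jordan_Normal_Form.DL_Rank"
begin

definition stieltjes :: "real measure \<Rightarrow> complex \<Rightarrow> complex" where
  "stieltjes \<mu> z = (\<integral> t. 1 / (complex_of_real t - z) \<partial>\<mu>)"

text \<open>K^0(lambda,z) = (1/2pi) int_0^{2pi} lambda/(c M^0(z) - z) dtheta = lambda S^0(z).\<close>
definition K0 :: "(complex \<Rightarrow> complex) \<Rightarrow> real \<Rightarrow> complex \<Rightarrow> complex" where
  "K0 S lam z = lam * S z"

definition M0 :: "nat \<Rightarrow> (nat \<Rightarrow> real) \<Rightarrow> (nat \<Rightarrow> real) \<Rightarrow> (complex \<Rightarrow> complex) \<Rightarrow> complex \<Rightarrow> complex" where
  "M0 J \<omega> lam S z = (\<Sum>j<J. \<omega> j * lam j / (1 + K0 S (lam j) z))"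

definition v0 :: "(nat \<Rightarrow> real) \<Rightarrow> (complex \<Rightarrow> complex) \<Rightarrow> complex \<Rightarrow> nat \<Rightarrow> complex" where
  "v0 lam S z j = lam j / (1 + K0 S (lam j) z)"

definition wvec :: "nat \<Rightarrow> real \<Rightarrow> (nat \<Rightarrow> real) \<Rightarrow> (nat \<Rightarrow> real) \<Rightarrow> (complex \<Rightarrow> complex)
    \<Rightarrow> complex \<Rightarrow> nat \<Rightarrow> complex" where
  "wvec J c \<omega> lam S z j = complex_of_real (1 / (2 * pi)) *
     integral {0..2*pi} (\<lambda>\<theta>::real. v0 lam S z j / (complex_of_real c * M0 J \<omega> lam S z - z)\<^sup>2)"

definition Mmat :: "nat \<Rightarrow> real \<Rightarrow> (nat \<Rightarrow> real) \<Rightarrow> (nat \<Rightarrow> real) \<Rightarrow> (complex \<Rightarrow> complex)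
    \<Rightarrow> complex set \<Rightarrow> complex mat" where
  "Mmat J c \<omega> lam S Z = mat J J (\<lambda>(i,k). (1 / of_nat (card Z)) *
     (\<Sum>z\<in>Z. wvec J c \<omega> lam S z i * cnj (wvec J c \<omega> lam S z k)))"

definition pos_def_cmat :: "complex mat \<Rightarrow> bool" where
  "pos_def_cmat A \<longleftrightarrow> A \<in> carrier_mat (dim_row A) (dim_row A) \<and>
     (\<forall>x \<in> carrier_vec (dim_row A). x \<noteq> 0\<^sub>v (dim_row A) \<longrightarrow>
        (let q = conjugate x \<bullet> (A *\<^sub>v x) in Im q = 0 \<and> Re q > 0))"

end

theory Submission
  imports Defs
begin

lemma poly_lemma:
  fixes a u :: "nat \<Rightarrow> complex" and T :: "complex set"
  assumes inj: "inj_on a {..<n}" and fin: "finite T" and cT: "card T \<ge> n"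
    and nz: "\<forall>t\<in>T. \<forall>j<n. t + a j \<noteq> 0"
    and sz: "\<forall>t\<in>T. (\<Sum>j<n. u j / (t + a j)) = 0"
  shows "\<forall>j<n. u j = 0"
proof (cases "n = 0")
  case True then show ?thesis by simp
next
  case False
  define Q where "Q = (\<Sum>j<n. Polynomial.smult (u j) (\<Prod>i\<in>{..<n}-{j}. [:a i, 1:]))"
  have pQ: "poly Q x = (\<Sum>j<n. u j * (\<Prod>i\<in>{..<n}-{j}. x + a i))" for x
    unfolding Q_def by (simp add: poly_sum poly_prod add.commute)
  have degQ: "degree Q \<le> n - 1"
    unfolding Q_def
  proof (rule degree_sum_le)
    fix j assume j: "j \<in> {..<n}"
    have "degree (Polynomial.smult (u j) (\<Prod>i\<in>{..<n}-{j}. [:a i, 1:])) \<le> degree (\<Prod>i\<in>{..<n}-{j}. [:a i, 1:])"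
      by simp
    also have "\<dots> \<le> (\<Sum>i\<in>{..<n}-{j}. degree [:a i, 1:])" using degree_prod_sum_le[of "{..<n}-{j}" "\<lambda>i. [:a i, 1:]"] by (simp add: o_def)
    also have "\<dots> = card ({..<n}-{j})" by simp
    also have "\<dots> = n - 1" using j by simp
    finally show "degree (Polynomial.smult (u j) (\<Prod>i\<in>{..<n}-{j}. [:a i, 1:])) \<le> n - 1" .
  qed simp
  have rootT: "poly Q t = 0" if t: "t \<in> T" for t
  proof -
    have "poly Q t = (\<Sum>j<n. (\<Prod>i<n. t + a i) * (u j / (t + a j)))"
      unfolding pQ
    proof (rule sum.cong[OF refl])
      fix j assume j: "j \<in> {..<n}"
      have "(\<Prod>i<n. t + a i) = (t + a j) * (\<Prod>i\<in>{..<n}-{j}. t + a i)"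
        using j by (simp add: prod.remove)
      then show "u j * (\<Prod>i\<in>{..<n}-{j}. t + a i) = (\<Prod>i<n. t + a i) * (u j / (t + a j))"
        using nz t j by (simp add: field_simps)
    qed
    also have "\<dots> = (\<Prod>i<n. t + a i) * (\<Sum>j<n. u j / (t + a j))"
      by (simp add: sum_distrib_left)
    finally show ?thesis using sz t by simp
  qed
  have Q0: "Q = 0"
  proof (rule ccontr)
    assume "Q \<noteq> 0"
    then have "card {x. poly Q x = 0} \<le> degree Q" by (rule card_poly_roots_bound)
    moreover have "finite {x. poly Q x = 0}" using \<open>Q \<noteq> 0\<close> by (simp add: poly_roots_finite)
    then have "card T \<le> card {x. poly Q x = 0}" using rootT by (intro card_mono) auto
    ultimately show False using degQ cT False by linarith
  qed
  show ?thesis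
  proof (intro allI impI)
    fix j assume j: "j < n"
    have "poly Q (- a j) = u j * (\<Prod>i\<in>{..<n}-{j}. a i - a j)"
    proof -
      have "poly Q (- a j) = (\<Sum>k<n. u k * (\<Prod>i\<in>{..<n}-{k}. - a j + a i))" by (rule pQ)
      also have "\<dots> = u j * (\<Prod>i\<in>{..<n}-{j}. - a j + a i)"
      proof -
        have z: "(\<Sum>k\<in>{..<n}-{j}. u k * (\<Prod>i\<in>{..<n}-{k}. - a j + a i)) = 0"
        proof (rule sum.neutral, rule ballI)
          fix k assume "k \<in> {..<n} - {j}"
          then have "j \<in> {..<n}-{k}" using j by auto
          then have "(\<Prod>i\<in>{..<n}-{k}. - a j + a i) = 0"
            by (intro prod_zero) auto
          then show "u k * (\<Prod>i\<in>{..<n}-{k}. - a j + a i) = 0" by simp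
        qed
        show ?thesis using j z by (simp add: sum.remove)
      qed
      finally show ?thesis by simp
    qed
    moreover have "(\<Prod>i\<in>{..<n}-{j}. a i - a j) \<noteq> 0"
      using inj j by (auto simp: inj_on_def)
    ultimately show "u j = 0" using Q0 by simp
  qed
qed


lemma (in vec_space) rank_distinct_cols:
  assumes "A \<in> carrier_mat n nc" "rank A = nc"
  shows "distinct (cols A)"
proof (rule ccontr)
  assume nd: "\<not> distinct (cols A)"
  obtain S where S: "maximal S (\<lambda>T. T \<subseteq> set (cols A) \<and> lin_indpt T)"
    using maximal_exists[of "(\<lambda>T. T \<subseteq> set (cols A) \<and> lin_indpt T)" "card (set (cols A))" "{}"]
    by (meson List.finite_set card_mono empty_iff empty_subsetI finite_lin_indpt2 rev_finite_subset)
  then have "card S \<le> card (set (cols A))" by (simp add: card_mono maximal_def)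
  moreover have "card (set (cols A)) < nc"
    using assms(1) nd card_distinct[of "cols A"] card_length[of "cols A"] by fastforce
  ultimately have "card S < nc" by linarith
  then show False using rank_card_indpt[OF assms(1) S] assms(2) by simp
qed

lemma kernel_trivial:
  fixes B :: "'a::field mat"
  assumes B: "B \<in> carrier_mat n nc" and r: "vec_space.rank n B = nc"
    and v: "v \<in> carrier_vec nc" and Bv: "B *\<^sub>v v = 0\<^sub>v n"
  shows "v = 0\<^sub>v nc"
proof (rule ccontr)
  assume "v \<noteq> 0\<^sub>v nc"
  have d: "distinct (cols B)" by (rule vec_space.rank_distinct_cols[OF B r])
  have "module.lin_dep class_ring (module_vec TYPE('a) n) (set (cols B))"
    by (rule vec_space.lin_depI[OF B v \<open>v \<noteq> 0\<^sub>v nc\<close> Bv d])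
  moreover have "\<not> module.lin_dep class_ring (module_vec TYPE('a) n) (set (cols B))"
    by (rule vec_space.full_rank_lin_indpt[OF B r d])
  ultimately show False by simp
qed

lemma kernel_trivial_complex:
  fixes B :: "real mat" and x :: "complex vec"
  assumes B: "B \<in> carrier_mat n nc" and r: "vec_space.rank n B = nc"
    and x: "x \<in> carrier_vec nc" and Bx: "map_mat complex_of_real B *\<^sub>v x = 0\<^sub>v n"
  shows "x = 0\<^sub>v nc"
proof -
  define xr where "xr = vec nc (\<lambda>i. Re (x $ i))"
  define xi where "xi = vec nc (\<lambda>i. Im (x $ i))"
  have e: "(map_mat complex_of_real B *\<^sub>v x) $ a = Complex ((B *\<^sub>v xr) $ a) ((B *\<^sub>v xi) $ a)"
    if a: "a < n" for a
  proof -
    have "(map_mat complex_of_real B *\<^sub>v x) $ a = (\<Sum>i<nc. complex_of_real (B $$ (a,i)) * x $ i)"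
      using a B x by (simp add: scalar_prod_def row_def atLeast0LessThan)
    moreover have "(B *\<^sub>v xr) $ a = (\<Sum>i<nc. B $$ (a,i) * Re (x $ i))"
      using a B by (simp add: scalar_prod_def row_def xr_def atLeast0LessThan)
    moreover have "(B *\<^sub>v xi) $ a = (\<Sum>i<nc. B $$ (a,i) * Im (x $ i))"
      using a B by (simp add: scalar_prod_def row_def xi_def atLeast0LessThan)
    ultimately show ?thesis by (simp add: complex_eq_iff Re_sum Im_sum)
  qed
  have "B *\<^sub>v xr = 0\<^sub>v n"
    using e Bx B by (intro eq_vecI) (auto simp: xr_def, metis complex.sel(1) index_zero_vec(1) zero_complex.sel(1))
  then have r0: "xr = 0\<^sub>v nc" using kernel_trivial[OF B r] by (simp add: xr_def)
  have "B *\<^sub>v xi = 0\<^sub>v n"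
    using e Bx B by (intro eq_vecI) (auto simp: xi_def, metis complex.sel(2) index_zero_vec(1) zero_complex.sel(2))
  then have i0: "xi = 0\<^sub>v nc" using kernel_trivial[OF B r] by (simp add: xi_def)
  show ?thesis
  proof (rule eq_vecI)
    fix i assume "i < dim_vec (0\<^sub>v nc :: complex vec)"
    then have i: "i < nc" by simp
    have "Re (x $ i) = 0" using arg_cong[OF r0, of "\<lambda>v. v $ i"] i by (simp add: xr_def)
    moreover have "Im (x $ i) = 0" using arg_cong[OF i0, of "\<lambda>v. v $ i"] i by (simp add: xi_def)
    ultimately show "x $ i = 0\<^sub>v nc $ i" using i by (simp add: complex_eq_iff)
  qed (use x in simp)
qed


lemma adj_real:
  fixes B :: "real mat" and x m :: "complex vec"
  assumes B: "B \<in> carrier_mat n nc" and x: "x \<in> carrier_vec nc" and m: "m \<in> carrier_vec n"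
  shows "conjugate x \<bullet> (transpose_mat (map_mat complex_of_real B) *\<^sub>v m)
         = m \<bullet> conjugate (map_mat complex_of_real B *\<^sub>v x)"
proof -
  have L: "conjugate x \<bullet> (transpose_mat (map_mat complex_of_real B) *\<^sub>v m)
        = (\<Sum>i<nc. \<Sum>a<n. cnj (x$i) * (complex_of_real (B$$(a,i)) * m$a))"
    using B x m by (simp add: scalar_prod_def sum_distrib_left atLeast0LessThan col_def)
  have R: "m \<bullet> conjugate (map_mat complex_of_real B *\<^sub>v x)
        = (\<Sum>a<n. \<Sum>i<nc. m$a * (complex_of_real (B$$(a,i)) * cnj (x$i)))"
    using B x m by (simp add: scalar_prod_def sum_distrib_left atLeast0LessThan row_def cnj_sum)
  show ?thesis unfolding L R
    by (subst sum.swap) (simp add: mult_ac)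
qed

lemma quad_form:
  fixes w :: "'z \<Rightarrow> nat \<Rightarrow> complex" and y :: "complex vec"
  assumes y: "y \<in> carrier_vec J"
  shows "(mat J J (\<lambda>(i,k). (1 / of_nat D) * (\<Sum>z\<in>Z. w z i * cnj (w z k))) *\<^sub>v y) \<bullet> conjugate y
       = (1 / of_nat D) * (\<Sum>z\<in>Z. (\<Sum>a<J. cnj (y$a) * w z a) * cnj (\<Sum>b<J. cnj (y$b) * w z b))"
proof -
  have L: "(mat J J (\<lambda>(i,k). (1 / of_nat D) * (\<Sum>z\<in>Z. w z i * cnj (w z k))) *\<^sub>v y) \<bullet> conjugate y
     = (\<Sum>a<J. \<Sum>b<J. \<Sum>z\<in>Z. (1 / of_nat D) * (cnj (y$a) * w z a * (cnj (w z b) * y$b)))"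
    using y by (simp add: scalar_prod_def sum_distrib_left sum_distrib_right atLeast0LessThan row_def mult_ac)
  have "(\<Sum>z\<in>Z. (\<Sum>a<J. cnj (y$a) * w z a) * cnj (\<Sum>b<J. cnj (y$b) * w z b))
      = (\<Sum>z\<in>Z. \<Sum>a<J. \<Sum>b<J. cnj (y$a) * w z a * (cnj (w z b) * y$b))"
    unfolding cnj_sum complex_cnj_mult complex_cnj_cnj sum_product by (simp add: mult_ac)
  also have "\<dots> = (\<Sum>a<J. \<Sum>z\<in>Z. \<Sum>b<J. cnj (y$a) * w z a * (cnj (w z b) * y$b))"
    by (rule sum.swap)
  also have "\<dots> = (\<Sum>a<J. \<Sum>b<J. \<Sum>z\<in>Z. cnj (y$a) * w z a * (cnj (w z b) * y$b))"
    by (rule sum.cong[OF refl], rule sum.swap)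
  finally show ?thesis unfolding L by (simp add: sum_distrib_left)
qed

lemma sum_zero_real:
  fixes B :: "real mat" and x :: "complex vec"
  assumes B: "B \<in> carrier_mat n nc" and x: "x \<in> carrier_vec nc"
    and orth: "transpose_mat B *\<^sub>v vec n (\<lambda>_. 1) = 0\<^sub>v nc"
  shows "(\<Sum>a<n. (map_mat complex_of_real B *\<^sub>v x) $ a) = 0"
proof -
  have col0: "(\<Sum>a<n. B $$ (a,i)) = 0" if i: "i < nc" for i
  proof -
    have "(transpose_mat B *\<^sub>v vec n (\<lambda>_. 1)) $ i = 0" using orth i by simp
    then show ?thesis using B i by (simp add: scalar_prod_def atLeast0LessThan col_def)
  qed
  have "(\<Sum>a<n. (map_mat complex_of_real B *\<^sub>v x) $ a)
      = (\<Sum>a<n. \<Sum>i<nc. complex_of_real (B $$ (a,i)) * x $ i)"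
    using B x by (simp add: scalar_prod_def atLeast0LessThan row_def)
  also have "\<dots> = (\<Sum>i<nc. complex_of_real (\<Sum>a<n. B $$ (a,i)) * x $ i)"
    by (subst sum.swap) (simp add: sum_distrib_right)
  also have "\<dots> = 0" using col0 by simp
  finally show ?thesis .
qed

lemma alg_w:
  fixes T L :: complex
  assumes "T \<noteq> 0" "T + L \<noteq> 0"
  shows "(L / (1 + L * (1 / T))) / T\<^sup>2 = 1 / T - 1 / (T + L)"
proof -
  have e: "1 + L * (1 / T) = (T + L) / T" using assms by (simp add: field_simps)
  have n1: "(T + L) * (T * T) \<noteq> 0" using assms by simp
  have n2: "T * (T + L) \<noteq> 0" using assms by simp
  have "(L / (1 + L * (1 / T))) / T\<^sup>2 = (L * T / (T + L)) / (T * T)"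
    unfolding e by (simp add: power2_eq_square)
  also have "\<dots> = (L * T) / ((T + L) * (T * T))" by (simp add: divide_divide_eq_left)
  also have "\<dots> = L / (T * (T + L))"
    by (subst frac_eq_eq[OF n1 n2]) (simp add: algebra_simps)
  also have "\<dots> = 1 / T - 1 / (T + L)"
    by (subst diff_frac_eq) (use assms in \<open>simp_all add: algebra_simps\<close>)
  finally show ?thesis .
qed

theorem proposition1:
  fixes J :: nat and c :: real and \<omega> lam :: "nat \<Rightarrow> real"
    and Z :: "complex set" and B :: "real mat" and S :: "complex \<Rightarrow> complex"
  assumes omega_simplex: "\<forall>j<J. \<omega> j \<ge> 0" "(\<Sum>j<J. \<omega> j) = 1"
    and lambda_nonneg: "\<forall>j<J. lam j \<ge> 0"
    and lambda_distinct: "inj_on lam {..<J}"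
    and c_pos: "c > 0"
    and Z_fin: "finite Z" and Z_upper: "Z \<subseteq> {z. Im z > 0}" and Z_card: "card Z \<ge> J"
    and S_stieltjes: "\<exists>\<mu>. sets \<mu> = sets borel \<and> emeasure \<mu> (space \<mu>) = 1 \<and>
                        (\<forall>z. Im z > 0 \<longrightarrow> S z = stieltjes \<mu> z)"
    and S_eq: "\<forall>z. Im z > 0 \<longrightarrow> S z = 1 / (complex_of_real c * M0 J \<omega> lam S z - z)"
    and B_dim: "B \<in> carrier_mat J (J - 1)"
    and B_rank: "vec_space.rank J B = J - 1"
    and B_orth: "transpose_mat B *\<^sub>v vec J (\<lambda>_. 1) = 0\<^sub>v (J - 1)"
  shows "pos_def_cmat (transpose_mat (map_mat complex_of_real B) * Mmat J c \<omega> lam S Z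
                        * map_mat complex_of_real B)"
proof -
  define Bc where "Bc = map_mat complex_of_real B"
  define M where "M = Mmat J c \<omega> lam S Z"
  define w where "w z a = wvec J c \<omega> lam S z a" for z a
  define t where "t z = complex_of_real c * M0 J \<omega> lam S z - z" for z
  define A where "A = transpose_mat Bc * M * Bc"
  have Bc: "Bc \<in> carrier_mat J (J - 1)" using B_dim by (simp add: Bc_def)
  have BcT: "transpose_mat Bc \<in> carrier_mat (J - 1) J" using Bc by simp
  have Mc: "M \<in> carrier_mat J J" by (simp add: M_def Mmat_def)
  have Ac: "A \<in> carrier_mat (J - 1) (J - 1)" unfolding A_def using Bc BcT Mc by simp
  have Sz: "S z = 1 / t z" if z: "z \<in> Z" for z
    using S_eq Z_upper z by (auto simp: t_def)
  have M0S: "M0 J \<omega> lam S z = (\<Sum>j<J. \<omega> j * lam j / (1 + lam j * S z))" for z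
    by (simp add: M0_def K0_def)
  have ImS: "Im (S z) \<noteq> 0" if z: "z \<in> Z" for z
  proof
    assume h: "Im (S z) = 0"
    then have sr: "S z = complex_of_real (Re (S z))" by (simp add: complex_eq_iff)
    have "M0 J \<omega> lam S z = complex_of_real (\<Sum>j<J. \<omega> j * lam j / (1 + lam j * Re (S z)))"
      unfolding M0S by (subst sr) simp
    then have "Im (t z) = - Im z" by (simp add: t_def)
    moreover have "Im z > 0" using z Z_upper by auto
    ultimately have "Im (S z) \<noteq> 0" using Sz[OF z]
      by (simp add: Im_divide add_pos_nonneg)
    then show False using h by simp
  qed
  have tne: "t z \<noteq> 0" if z: "z \<in> Z" for z
    using ImS[OF z] Sz[OF z] by auto
  have ts: "t z = 1 / S z" if z: "z \<in> Z" for z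
    using Sz[OF z] tne[OF z] by simp
  have Imt: "Im (t z) \<noteq> 0" if z: "z \<in> Z" for z
  proof -
    have "S z \<noteq> 0" using ImS[OF z] by auto
    then have "(Re (S z))\<^sup>2 + (Im (S z))\<^sup>2 > 0" using ImS[OF z] by (simp add: add_nonneg_pos)
    then show ?thesis using ts[OF z] ImS[OF z] by (simp add: Im_divide)
  qed
  have tl: "t z + complex_of_real r \<noteq> 0" if z: "z \<in> Z" for z r
  proof
    assume "t z + complex_of_real r = 0"
    then have "Im (t z + complex_of_real r) = 0" by simp
    then show False using Imt[OF z] by simp
  qed
  have wform: "w z a = 1 / t z - 1 / (t z + complex_of_real (lam a))" if z: "z \<in> Z" for z a
  proof -
    define C where "C = v0 lam S z a / (complex_of_real c * M0 J \<omega> lam S z - z)\<^sup>2"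
    have "w z a = complex_of_real (1 / (2 * pi)) * integral {0..2*pi} (\<lambda>\<theta>::real. C)"
      by (simp add: w_def wvec_def C_def)
    also have "\<dots> = C" by (simp add: scaleR_conv_of_real field_simps)
    also have "C = (complex_of_real (lam a) / (1 + complex_of_real (lam a) * (1 / t z))) / (t z)\<^sup>2"
      by (simp add: C_def v0_def K0_def t_def[symmetric] Sz[OF z])
    also have "\<dots> = 1 / t z - 1 / (t z + complex_of_real (lam a))"
      by (rule alg_w[OF tne[OF z] tl[OF z, of "lam a"]])
    finally show ?thesis .
  qed
  have tinj: "inj_on t Z"
  proof (rule inj_onI)
    fix z1 z2 assume z1: "z1 \<in> Z" and z2: "z2 \<in> Z" and e: "t z1 = t z2"
    then have "S z1 = S z2" using Sz by simp
    then have "M0 J \<omega> lam S z1 = M0 J \<omega> lam S z2" unfolding M0S by simp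
    then show "z1 = z2" using e by (simp add: t_def)
  qed
  show ?thesis
    unfolding pos_def_cmat_def Bc_def[symmetric] M_def[symmetric] A_def[symmetric]
  proof (intro conjI ballI impI)
    show "A \<in> carrier_mat (dim_row A) (dim_row A)" using Ac by simp
  next
    fix x :: "complex vec" assume x0: "x \<in> carrier_vec (dim_row A)" and xne: "x \<noteq> 0\<^sub>v (dim_row A)"
    have x: "x \<in> carrier_vec (J - 1)" using x0 Ac by simp
    have xne': "x \<noteq> 0\<^sub>v (J - 1)" using xne Ac by simp
    define y where "y = Bc *\<^sub>v x"
    have y: "y \<in> carrier_vec J" using Bc x by (simp add: y_def)
    define g where "g z = (\<Sum>a<J. cnj (y$a) * w z a)" for z
    have Ax: "A *\<^sub>v x = transpose_mat Bc *\<^sub>v (M *\<^sub>v y)"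
      unfolding A_def y_def using BcT Mc Bc x
      by (simp add: assoc_mult_mat_vec[of _ "J - 1" J _ "J - 1"])
    have q1: "conjugate x \<bullet> (A *\<^sub>v x) = (M *\<^sub>v y) \<bullet> conjugate y"
      unfolding Ax y_def Bc_def
      by (rule adj_real[OF B_dim x]) (use Mc y in \<open>simp add: Bc_def y_def\<close>)
    have q2: "(M *\<^sub>v y) \<bullet> conjugate y = (1 / of_nat (card Z)) * (\<Sum>z\<in>Z. g z * cnj (g z))"
      unfolding M_def Mmat_def g_def w_def by (rule quad_form[OF y])
    have q3: "(\<Sum>z\<in>Z. g z * cnj (g z)) = complex_of_real (\<Sum>z\<in>Z. (cmod (g z))\<^sup>2)"
      by (simp only: of_real_sum complex_norm_square)
    have sy: "(\<Sum>a<J. y $ a) = 0"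
      unfolding y_def Bc_def by (rule sum_zero_real[OF B_dim x B_orth])
    have ex: "\<exists>z\<in>Z. g z \<noteq> 0"
    proof (rule ccontr)
      assume "\<not> (\<exists>z\<in>Z. g z \<noteq> 0)"
      then have g0: "\<forall>z\<in>Z. g z = 0" by simp
      have su: "(\<Sum>a<J. cnj (y $ a)) = 0" using sy by (simp flip: cnj_sum)
      have P5: "\<forall>tt\<in>t ` Z. (\<Sum>j<J. cnj (y $ j) / (tt + complex_of_real (lam j))) = 0"
      proof
        fix tt assume "tt \<in> t ` Z"
        then obtain z where z: "z \<in> Z" and tt: "tt = t z" by auto
        have "g z = (\<Sum>a<J. cnj (y$a) * (1 / t z) - cnj (y$a) / (t z + complex_of_real (lam a)))"
          unfolding g_def by (rule sum.cong[OF refl]) (simp add: wform[OF z] right_diff_distrib)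
        also have "\<dots> = (\<Sum>a<J. cnj (y$a)) * (1 / t z) - (\<Sum>a<J. cnj (y$a) / (t z + complex_of_real (lam a)))"
          by (simp add: sum_subtractf sum_divide_distrib)
        finally show "(\<Sum>j<J. cnj (y $ j) / (tt + complex_of_real (lam j))) = 0"
          using g0 z su tt by simp
      qed
      have P1: "inj_on (\<lambda>j. complex_of_real (lam j)) {..<J}"
        using lambda_distinct by (auto simp: inj_on_def)
      have P3: "card (t ` Z) \<ge> J" using card_image[OF tinj] Z_card by simp
      have P4: "\<forall>tt\<in>t ` Z. \<forall>j<J. tt + complex_of_real (lam j) \<noteq> 0" using tl by blast
      have P2: "finite (t ` Z)" using Z_fin by simp
      have "\<forall>j<J. cnj (y $ j) = 0"
        by (rule poly_lemma[OF P1 P2 P3 P4 P5])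
      then have "y = 0\<^sub>v J" using y by (intro eq_vecI) auto
      then have "x = 0\<^sub>v (J - 1)"
        using kernel_trivial_complex[OF B_dim B_rank x] by (simp add: y_def Bc_def)
      then show False using xne' by simp
    qed
    then obtain z0 where z0: "z0 \<in> Z" "g z0 \<noteq> 0" by blast
    have pos: "(\<Sum>z\<in>Z. (cmod (g z))\<^sup>2) > 0"
      by (rule sum_pos2[OF Z_fin z0(1)]) (use z0 in auto)
    have cZ: "card Z > 0" using Z_fin z0(1) card_gt_0_iff by blast
    have q: "conjugate x \<bullet> (A *\<^sub>v x) = complex_of_real ((1 / real (card Z)) * (\<Sum>z\<in>Z. (cmod (g z))\<^sup>2))"
      unfolding q1 q2 q3 by simp
    show "let q = conjugate x \<bullet> (A *\<^sub>v x) in Im q = 0 \<and> 0 < Re q"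
      unfolding q Let_def using pos cZ by simp
  qed
qed

end
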